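(* Let $K$ be a finite-dimensional Kantor triple system over $\Bbbk\in\{\mathbb{R},\mathbb{C}\}$, $L$ the span of the operators $\langle u,v\rangle$ on $K$, and for $a,b\in K$ let $\tilde K_{ab}:K\oplus L\to K\oplus L$ be $\tilde K_{ab}(z+Z)=-\tfrac16(z\,\langle a,b\rangle(z)\,z)-\tfrac12 Z(\langle a,b\rangle(z))+\tfrac1{12}\langle (z\,\langle a,b\rangle(z)\,z),z\rangle+\tfrac12\langle Z(a),Z(b)\rangle$ ($z\in K$, $Z\in L$). If $a,b,c,d\in K$ satisfy $\langle a,b\rangle=\langle c,d\rangle$ (as operators on $K$), then $\tilde K_{ab}=\tilde K_{cd}$.
   Context: A triple system is a vector space with trilinear product $(xyz)$; $\langle u,v\rangle$ denotes the linear operator $z\mapsto(uzv)-(vzu)$. A Kantor triple system (KTS) satisfies, for all $u,v,x,y,z$: $(uv(xyz))-(xy(uvz))=((uvx)yz)-(x(vuy)z)$ and $\langle\langle u,v\rangle(x),y\rangle=\langle (yxu),v\rangle-\langle (yxv),u\rangle$. *)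

theory Defs
  imports Complex_Main "HOL-Library.Function_Algebras"
begin

text \<open>A triple system on a vector space 'a over the field 'k, given by the scalar
multiplication s and the trilinear product t (written (x y z) in the paper).\<close>

definition br :: "('a \<Rightarrow> 'a \<Rightarrow> 'a \<Rightarrow> 'a) \<Rightarrow> 'a \<Rightarrow> 'a \<Rightarrow> 'a \<Rightarrow> 'a::ab_group_add" where
  "br t u v = (\<lambda>z. t u z v - t v z u)"

definition fin_dim :: "('k::field \<Rightarrow> 'a \<Rightarrow> 'a::ab_group_add) \<Rightarrow> bool" where
  "fin_dim s \<longleftrightarrow> (\<exists>B. finite B \<and> module.span s B = UNIV)"

definition trilinear :: "('k::field \<Rightarrow> 'a \<Rightarrow> 'a::ab_group_add) \<Rightarrow> ('a \<Rightarrow> 'a \<Rightarrow> 'a \<Rightarrow> 'a) \<Rightarrow> bool" where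
  "trilinear s t \<longleftrightarrow>
     (\<forall>y z. Vector_Spaces.linear s s (\<lambda>x. t x y z)) \<and>
     (\<forall>x z. Vector_Spaces.linear s s (\<lambda>y. t x y z)) \<and>
     (\<forall>x y. Vector_Spaces.linear s s (\<lambda>z. t x y z))"

definition fd_kts :: "('k::field \<Rightarrow> 'a \<Rightarrow> 'a::ab_group_add) \<Rightarrow> ('a \<Rightarrow> 'a \<Rightarrow> 'a \<Rightarrow> 'a) \<Rightarrow> bool" where
  "fd_kts s t \<longleftrightarrow> Vector_Spaces.vector_space s \<and> fin_dim s \<and> trilinear s t \<and>
     (\<forall>u v x y z. t u v (t x y z) - t x y (t u v z) = t (t u v x) y z - t x (t v u y) z) \<and>
     (\<forall>u v x y. br t (br t u v x) y = (\<lambda>w. br t (t y x u) v w - br t (t y x v) u w))"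

definition opscale :: "('k \<Rightarrow> 'a \<Rightarrow> 'a) \<Rightarrow> 'k \<Rightarrow> ('a \<Rightarrow> 'a) \<Rightarrow> ('a \<Rightarrow> 'a)" where
  "opscale s c f = (\<lambda>x. s c (f x))"

definition Lspan :: "('k::field \<Rightarrow> 'a \<Rightarrow> 'a::ab_group_add) \<Rightarrow> ('a \<Rightarrow> 'a \<Rightarrow> 'a \<Rightarrow> 'a) \<Rightarrow> ('a \<Rightarrow> 'a) set" where
  "Lspan s t = module.span (opscale s) {br t u v | u v. True}"

text \<open>The map tilde K_ab on K \<oplus> L, elements z + Z represented as pairs (z, Z).\<close>
definition Ktilde :: "('k::field \<Rightarrow> 'a \<Rightarrow> 'a::ab_group_add) \<Rightarrow> ('a \<Rightarrow> 'a \<Rightarrow> 'a \<Rightarrow> 'a) \<Rightarrow> 'a \<Rightarrow> 'a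
     \<Rightarrow> 'a \<times> ('a \<Rightarrow> 'a) \<Rightarrow> 'a \<times> ('a \<Rightarrow> 'a)" where
  "Ktilde s t a b p = (case p of (z, Z) \<Rightarrow>
     (s (- (1/6)) (t z (br t a b z) z) - s (1/2) (Z (br t a b z)),
      (\<lambda>w. s (1/12) (br t (t z (br t a b z) z) z w) + s (1/2) (br t (Z a) (Z b) w))))"

end

theory Submission
  imports Defs
begin

context
  fixes s :: "'k::field_char_0 \<Rightarrow> 'a::ab_group_add \<Rightarrow> 'a" and t :: "'a \<Rightarrow> 'a \<Rightarrow> 'a \<Rightarrow> 'a"
  assumes VS: "Vector_Spaces.vector_space s" and TL: "trilinear s t"
  and A1: "\<And>u v x y z. t u v (t x y z) - t x y (t u v z) = t (t u v x) y z - t x (t v u y) z"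
  and A2: "\<And>u v x y. br t (br t u v x) y = (\<lambda>w. br t (t y x u) v w - br t (t y x v) u w)"
begin

lemma lin_parts:
  assumes "Vector_Spaces.linear s s f"
  shows "f (x + y) = f x + f y" "f (s c x) = s c (f x)"
  using assms unfolding Vector_Spaces.linear_def module_hom_def module_hom_axioms_def by auto

lemma add_diff:
  fixes f :: "'a \<Rightarrow> 'a"
  assumes "\<And>x y. f (x + y) = f x + f y"
  shows "f (x - y) = f x - f y" "f 0 = 0"
proof -
  have "f x = f (x - y) + f y" using assms[of "x - y" y] by (simp only: diff_add_cancel)
  then show "f (x - y) = f x - f y" by (simp add: eq_diff_eq)
  have "f 0 + f 0 = f 0" using assms[of 0 0] by simp
  then show "f 0 = 0" by simp
qed

lemma tlin:
  "t (x + y) b c = t x b c + t y b c" "t (s k x) b c = s k (t x b c)"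
  "t a (x + y) c = t a x c + t a y c" "t a (s k x) c = s k (t a x c)"
  "t a b (x + y) = t a b x + t a b y" "t a b (s k x) = s k (t a b x)"
  using TL lin_parts unfolding trilinear_def by blast+

lemma tdiff:
  "t (x - y) b c = t x b c - t y b c" "t 0 b c = 0"
  "t a (x - y) c = t a x c - t a y c" "t a 0 c = 0"
  "t a b (x - y) = t a b x - t a b y" "t a b 0 = 0"
  using add_diff[of "\<lambda>x. t x b c"] add_diff[of "\<lambda>x. t a x c"] add_diff[of "\<lambda>x. t a b x"] tlin
  by auto

lemma key1:
  "t (br t p q b) a u - t (br t p q a) b u = t p (br t a b q) u - t q (br t a b p) u"
proof -
  have e: "t (t x y z) a' u' = t x y (t z a' u') - t z a' (t x y u') + t z (t y x a') u'" for x y z a' u'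
    proof -
    have "t (t x y z) a' u' - t z (t y x a') u' = t x y (t z a' u') - t z a' (t x y u')"
      using A1[of x y z a' u'] by simp
    then show ?thesis by (simp add: diff_eq_eq)
  qed
  have L: "t (br t p q b) a u - t (br t p q a) b u =
    (t (t p b q) a u - t (t q b p) a u) - (t (t p a q) b u - t (t q a p) b u)"
    unfolding br_def tdiff ..
  have R: "t p (br t a b q) u - t q (br t a b p) u = (t p (t a q b) u - t p (t b q a) u) - (t q (t a p b) u - t q (t b p a) u)"
    unfolding br_def tdiff ..
  note e1 = e[of p b q a u] and e2 = e[of q b p a u] and e3 = e[of p a q b u] and e4 = e[of q a p b u]
  have grp: "(A - B + C) - (D - E + F) - ((E - D + M) - (B - A + I)) = (I - F) - (M - C)"
    for A B C D E F M I :: 'a by (simp add: algebra_simps)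
  show ?thesis unfolding L R e1 e2 e3 e4 by (rule grp)
qed

lemma br_diff1: "br t x v w - br t y v w = br t (x - y) v w"
  unfolding br_def tdiff by (simp add: algebra_simps)

lemma Bgen:
  "br t (br t u v a) (br t p q b) w + br t (br t p q a) (br t u v b) w =
   br t (t p (br t a b q) u - t q (br t a b p) u) v w - br t (t p (br t a b q) v - t q (br t a b p) v) u w"
proof -
  have n: "br t x y w = - br t y x w" for x y unfolding br_def by simp
  have 1: "br t (br t u v a) (br t p q b) w = br t (t (br t p q b) a u) v w - br t (t (br t p q b) a v) u w"
    using A2[of u v a "br t p q b"] by (simp add: fun_eq_iff)
  have 2: "br t (br t p q a) (br t u v b) w = - (br t (t (br t p q a) b u) v w - br t (t (br t p q a) b v) u w)"
    using A2[of u v b "br t p q a"] n[of "br t p q a" "br t u v b"] by (simp add: fun_eq_iff)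
  have "br t (br t u v a) (br t p q b) w + br t (br t p q a) (br t u v b) w =
     (br t (t (br t p q b) a u) v w - br t (t (br t p q a) b u) v w)
     - (br t (t (br t p q b) a v) u w - br t (t (br t p q a) b v) u w)"
    unfolding 1 2 by (simp add: algebra_simps)
  also have "\<dots> = br t (t (br t p q b) a u - t (br t p q a) b u) v w - br t (t (br t p q b) a v - t (br t p q a) b v) u w"
    unfolding br_diff1 ..
  finally show ?thesis unfolding key1 .
qed


lemma MS: "module s" using VS by (simp add: module_iff_vector_space)

lemma br_lin:
  "br t (x + y) v w = br t x v w + br t y v w" "br t v (x + y) w = br t v x w + br t v y w"
  "br t (s c x) v w = s c (br t x v w)" "br t v (s c x) w = s c (br t v x w)"
  "br t 0 v w = 0" "br t v 0 w = 0"
  unfolding br_def tlin tdiff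
  by (simp_all add: module.scale_right_diff_distrib[OF MS] add_diff_add)

lemma mod_op: "module (opscale s)"
  unfolding module_def opscale_def
  by (simp add: fun_eq_iff module.scale_right_distrib[OF MS] module.scale_left_distrib[OF MS]
     module.scale_scale[OF MS] module.scale_one[OF MS])

lemma opapp: "opscale s c g x = s c (g x)" "(f + h) x = f x + h x" "(0::'a \<Rightarrow> 'a) x = 0"
  by (simp_all add: opscale_def)

lemma sc_add: "s c x + s c y = s c (x + y)"
  using module.scale_right_distrib[OF MS] by simp

lemma half: "s (1/2) (x + x) = x"
proof -
  have "x + x = s 2 x"
    using module.scale_left_distrib[OF MS, of 1 1 x] module.scale_one[OF MS] by simp
  then show ?thesis using module.scale_scale[OF MS] module.scale_one[OF MS] by simp
qed

lemma Bspan: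
  assumes X: "br t a b = br t c d" and g: "g \<in> {br t u v | u v. True}" and Y: "Y \<in> Lspan s t"
  shows "br t (g a) (Y b) w + br t (Y a) (g b) w = br t (g c) (Y d) w + br t (Y c) (g d) w"
proof -
  have "\<forall>w. br t (g a) (Y b) w + br t (Y a) (g b) w = br t (g c) (Y d) w + br t (Y c) (g d) w"
    using Y unfolding Lspan_def
  proof (rule module.span_induct_alt[OF mod_op, where h = "\<lambda>Y. \<forall>w. br t (g a) (Y b) w + br t (Y a) (g b) w = br t (g c) (Y d) w + br t (Y c) (g d) w"])
    show "\<forall>w. br t (g a) ((0::'a\<Rightarrow>'a) b) w + br t ((0::'a\<Rightarrow>'a) a) (g b) w = br t (g c) ((0::'a\<Rightarrow>'a) d) w + br t ((0::'a\<Rightarrow>'a) c) (g d) w"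
      by (simp add: opapp br_lin)
  next
    fix k h Y
    assume h: "h \<in> {br t u v | u v. True}"
      and IH: "\<forall>w. br t (g a) (Y b) w + br t (Y a) (g b) w = br t (g c) (Y d) w + br t (Y c) (g d) w"
    show "\<forall>w. br t (g a) ((opscale s k h + Y) b) w + br t ((opscale s k h + Y) a) (g b) w
       = br t (g c) ((opscale s k h + Y) d) w + br t ((opscale s k h + Y) c) (g d) w"
    proof
      fix w
      obtain u v where gu: "g = br t u v" using g by auto
      obtain p q where hp: "h = br t p q" using h by auto
      have gen: "br t (g a) (h b) w + br t (h a) (g b) w = br t (g c) (h d) w + br t (h c) (g d) w"
        unfolding gu hp Bgen X ..
      have "br t (g a) ((opscale s k h + Y) b) w + br t ((opscale s k h + Y) a) (g b) w
         = s k (br t (g a) (h b) w + br t (h a) (g b) w) + (br t (g a) (Y b) w + br t (Y a) (g b) w)"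
        unfolding opapp br_lin sc_add[symmetric] by (simp add: algebra_simps)
      also have "\<dots> = s k (br t (g c) (h d) w + br t (h c) (g d) w) + (br t (g c) (Y d) w + br t (Y c) (g d) w)"
        unfolding gen IH[rule_format] ..
      also have "\<dots> = br t (g c) ((opscale s k h + Y) d) w + br t ((opscale s k h + Y) c) (g d) w"
        unfolding opapp br_lin sc_add[symmetric] by (simp add: algebra_simps)
      finally show "br t (g a) ((opscale s k h + Y) b) w + br t ((opscale s k h + Y) a) (g b) w
       = br t (g c) ((opscale s k h + Y) d) w + br t ((opscale s k h + Y) c) (g d) w" .
    qed
  qed
  then show ?thesis by blast
qed

lemma Qspan:
  assumes X: "br t a b = br t c d" and Z: "Z \<in> Lspan s t"
  shows "br t (Z a) (Z b) w = br t (Z c) (Z d) w"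
proof -
  let ?G = "{br t u v | u v. True}"
  have "Z \<in> module.span (opscale s) ?G \<and> (\<forall>w. br t (Z a) (Z b) w = br t (Z c) (Z d) w)"
    using Z unfolding Lspan_def
  proof (rule module.span_induct_alt[OF mod_op, where h = "\<lambda>Z. Z \<in> module.span (opscale s) ?G \<and> (\<forall>w. br t (Z a) (Z b) w = br t (Z c) (Z d) w)"])
    show "(0::'a\<Rightarrow>'a) \<in> module.span (opscale s) ?G \<and> (\<forall>w. br t ((0::'a\<Rightarrow>'a) a) ((0::'a\<Rightarrow>'a) b) w = br t ((0::'a\<Rightarrow>'a) c) ((0::'a\<Rightarrow>'a) d) w)"
      by (simp add: opapp br_lin module.span_zero[OF mod_op])
  next
    fix k g Z
    assume g: "g \<in> ?G"
      and IH0: "Z \<in> module.span (opscale s) ?G \<and> (\<forall>w. br t (Z a) (Z b) w = br t (Z c) (Z d) w)"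
    then have IH: "\<forall>w. br t (Z a) (Z b) w = br t (Z c) (Z d) w" and Zs0: "Z \<in> module.span (opscale s) ?G" by auto
    have gs0: "g \<in> module.span (opscale s) ?G" by (rule module.span_base[OF mod_op g])
    have mem: "opscale s k g + Z \<in> module.span (opscale s) ?G"
      by (rule module.span_add[OF mod_op module.span_scale[OF mod_op gs0] Zs0])
    have eq: "\<forall>w. br t ((opscale s k g + Z) a) ((opscale s k g + Z) b) w = br t ((opscale s k g + Z) c) ((opscale s k g + Z) d) w"
    proof
      fix w
      have Zs: "Z \<in> Lspan s t" using Zs0 unfolding Lspan_def .
      have gs: "g \<in> Lspan s t" unfolding Lspan_def using gs0 .
      have gg: "br t (g a) (g b) w = br t (g c) (g d) w"
      proof -
        have "br t (g a) (g b) w + br t (g a) (g b) w = br t (g c) (g d) w + br t (g c) (g d) w"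
          using Bspan[OF X g gs, of w] .
        then have "s (1/2) (br t (g a) (g b) w + br t (g a) (g b) w) = s (1/2) (br t (g c) (g d) w + br t (g c) (g d) w)" by (simp only:)
        then show ?thesis unfolding half .
      qed
      have B: "br t (g a) (Z b) w + br t (Z a) (g b) w = br t (g c) (Z d) w + br t (Z c) (g d) w"
        using Bspan[OF X g Zs] .
      have "br t ((opscale s k g + Z) a) ((opscale s k g + Z) b) w
         = s k (s k (br t (g a) (g b) w)) + s k (br t (g a) (Z b) w + br t (Z a) (g b) w) + br t (Z a) (Z b) w"
        unfolding opapp br_lin sc_add[symmetric] by (simp add: algebra_simps)
      also have "\<dots> = s k (s k (br t (g c) (g d) w)) + s k (br t (g c) (Z d) w + br t (Z c) (g d) w) + br t (Z c) (Z d) w"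
        unfolding gg B IH[rule_format] ..
      also have "\<dots> = br t ((opscale s k g + Z) c) ((opscale s k g + Z) d) w"
        unfolding opapp br_lin sc_add[symmetric] by (simp add: algebra_simps)
      finally show "br t ((opscale s k g + Z) a) ((opscale s k g + Z) b) w = br t ((opscale s k g + Z) c) ((opscale s k g + Z) d) w" .
    qed
    show "opscale s k g + Z \<in> module.span (opscale s) ?G \<and> (\<forall>w. br t ((opscale s k g + Z) a) ((opscale s k g + Z) b) w = br t ((opscale s k g + Z) c) ((opscale s k g + Z) d) w)"
      using mem eq by blast
  qed
  then show ?thesis by blast
qed

end

lemma generic:
  fixes s :: "'k::field_char_0 \<Rightarrow> 'a::ab_group_add \<Rightarrow> 'a"
  assumes K: "fd_kts s t" and X: "br t a b = br t c d" and Z: "Z \<in> Lspan s t"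
  shows "Ktilde s t a b (z, Z) = Ktilde s t c d (z, Z)"
proof -
  have VS: "Vector_Spaces.vector_space s" and TL: "trilinear s t"
    and A1: "\<And>u v x y z. t u v (t x y z) - t x y (t u v z) = t (t u v x) y z - t x (t v u y) z"
    and A2: "\<And>u v x y. br t (br t u v x) y = (\<lambda>w. br t (t y x u) v w - br t (t y x v) u w)"
    using K unfolding fd_kts_def by blast+
  have "br t (Z a) (Z b) w = br t (Z c) (Z d) w" for w
    using Qspan[OF VS TL A1 A2 X Z] .
  then show ?thesis unfolding Ktilde_def using X by simp
qed

theorem mainTheorem9:
  shows "(\<forall>(s::real \<Rightarrow> 'a::ab_group_add \<Rightarrow> 'a) t a b c d.
            fd_kts s t \<longrightarrow> br t a b = br t c d \<longrightarrow>
            (\<forall>z. \<forall>Z\<in>Lspan s t. Ktilde s t a b (z, Z) = Ktilde s t c d (z, Z)))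
       \<and> (\<forall>(s::complex \<Rightarrow> 'b::ab_group_add \<Rightarrow> 'b) t a b c d.
            fd_kts s t \<longrightarrow> br t a b = br t c d \<longrightarrow>
            (\<forall>z. \<forall>Z\<in>Lspan s t. Ktilde s t a b (z, Z) = Ktilde s t c d (z, Z)))"
proof (intro conjI allI impI ballI)
  fix s :: "real \<Rightarrow> 'a \<Rightarrow> 'a" and t a b c d z Z
  assume "fd_kts s t" "br t a b = br t c d" "Z \<in> Lspan s t"
  then show "Ktilde s t a b (z, Z) = Ktilde s t c d (z, Z)" by (rule generic)
next
  fix s :: "complex \<Rightarrow> 'b \<Rightarrow> 'b" and t a b c d z Z
  assume "fd_kts s t" "br t a b = br t c d" "Z \<in> Lspan s t"
  then show "Ktilde s t a b (z, Z) = Ktilde s t c d (z, Z)" by (rule generic)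
qed

end
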